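(* For every $n\ge 6$, $\mathrm{ex}_3(n;\{P,C,P^3_2\cup K^3_3\}\mid M)=2n-4$. That is, every $n$-vertex 3-graph containing two disjoint edges and containing no copy of $P$, of $C$, or of $P^3_2\cup K^3_3$ has at most $2n-4$ edges, and this bound is attained.
   Context: All hypergraphs are 3-uniform; containment means containing an isomorphic copy. $P$ is the loose 3-uniform path of length 3: vertices $a,b,c,d,e,f,g$, edges $\{a,b,c\},\{c,d,e\},\{e,f,g\}$. $C$ is the loose triangle: vertices $x_1,x_2,x_3,y_1,y_2,y_3$, edges $\{x_1,y_3,x_2\},\{x_2,y_1,x_3\},\{x_3,y_2,x_1\}$. $M$ consists of two disjoint edges. $P^3_2$ is two edges sharing exactly one vertex; $K^3_3$ is a single edge; $P^3_2\cup K^3_3$ is their vertex-disjoint union (8 vertices, 3 edges). $\mathrm{ex}_3(n;\mathcal F\mid\mathcal G)$ is the maximum number of edges of an $n$-vertex 3-graph containing no member of $\mathcal F$ and containing some member of $\mathcal G$. *)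

theory Defs
  imports Main
begin

definition contains :: "'a set set \<Rightarrow> nat set set \<Rightarrow> bool" where
  "contains H F \<longleftrightarrow> (\<exists>f. inj_on f (\<Union>F) \<and> (\<forall>e\<in>F. f ` e \<in> H))"

definition three_graph :: "nat \<Rightarrow> nat set set \<Rightarrow> bool" where
  "three_graph n H \<longleftrightarrow> (\<forall>e\<in>H. e \<subseteq> {..<n} \<and> card e = 3)"

definition ex3 :: "nat \<Rightarrow> nat set set set \<Rightarrow> nat set set set \<Rightarrow> nat" where
  "ex3 n Fs Gs = Max {card H | H. three_graph n H \<and> (\<forall>F\<in>Fs. \<not> contains H F)
                                  \<and> (\<exists>G\<in>Gs. contains H G)}"

definition loose_path3 :: "nat set set" where
  "loose_path3 = {{0,1,2},{2,3,4},{4,5,6}}"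

text \<open>Loose triangle: x1=0, y3=1, x2=2, y1=3, x3=4, y2=5.\<close>
definition loose_triangle :: "nat set set" where
  "loose_triangle = {{0,1,2},{2,3,4},{4,5,0}}"

definition matching2 :: "nat set set" where
  "matching2 = {{0,1,2},{3,4,5}}"

definition P32_K33 :: "nat set set" where
  "P32_K33 = {{0,1,2},{2,3,4},{5,6,7}}"

end

theory Submission imports Defs begin

lemma contains_via_list:
  assumes "distinct xs" "\<Union>F \<subseteq> {..<length xs}" "\<forall>e\<in>F. (\<lambda>i. xs!i) ` e \<in> H"
  shows "contains H F"
  unfolding contains_def
  apply (rule exI[of _ "\<lambda>i. xs!i"])
  using assms inj_on_nth[of xs "\<Union>F"] by auto

lemma card3_pick1:
  assumes "card h = 3" "w \<in> h"
  obtains a b where "h = {w,a,b}" "a\<noteq>b" "a\<noteq>w" "b\<noteq>w"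
proof -
  have "card (h - {w}) = 2" using assms by simp
  then obtain a b where ab: "h - {w} = {a,b}" "a\<noteq>b" by (auto simp: card_2_iff)
  have "h = insert w (h - {w})" using assms(2) by (simp add: insert_absorb)
  then have "h = {w,a,b}" using ab by simp
  moreover have "a \<noteq> w" "b \<noteq> w" using ab by blast+
  ultimately show ?thesis using that ab by blast
qed

lemma card3_pick2:
  assumes "card h = 3" "p \<in> h" "q \<in> h" "p \<noteq> q"
  obtains c where "h = {p,q,c}" "c\<noteq>p" "c\<noteq>q"
proof -
  obtain a b where h: "h = {p,a,b}" "a\<noteq>b" "a\<noteq>p" "b\<noteq>p" by (rule card3_pick1[OF assms(1,2)])
  show ?thesis
  proof (cases "q = a")
    case True then show ?thesis using h that by auto
  next
    case False then have "q = b" using h assms by auto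
    then show ?thesis using h that by auto
  qed
qed

lemma card1_elem: "card A = 1 \<Longrightarrow> \<exists>w. A = {w}"
  by (simp add: card_1_singleton_iff)

lemma L_Q:
  assumes "h1 \<in> H" "h2 \<in> H" "h3 \<in> H" "card h1 = 3" "card h2 = 3" "card h3 = 3"
    "card (h1 \<inter> h2) = 1" "h3 \<inter> h1 = {}" "h3 \<inter> h2 = {}"
  shows "contains H P32_K33"
proof -
  obtain w where w: "h1 \<inter> h2 = {w}" using card1_elem assms by blast
  obtain a b where h1: "h1 = {w,a,b}" "a\<noteq>b" "a\<noteq>w" "b\<noteq>w" using card3_pick1[of h1 w] assms w by blast
  obtain c d where h2: "h2 = {w,c,d}" "c\<noteq>d" "c\<noteq>w" "d\<noteq>w" using card3_pick1[of h2 w] assms w by blast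
  obtain x y z where h3: "h3 = {x,y,z}" "x\<noteq>y" "x\<noteq>z" "y\<noteq>z" using assms(6) by (auto simp: card_3_iff)
  have m: "a \<in> h1" "b \<in> h1" "w \<in> h1" "w \<in> h2" "c \<in> h2" "d \<in> h2" "x \<in> h3" "y \<in> h3" "z \<in> h3"
    using h1 h2 h3 by auto
  have n: "a \<notin> h2" "b \<notin> h2" "c \<notin> h1" "d \<notin> h1"
    using w m h1(3,4) h2(3,4) by blast+
  have n2: "x \<notin> h1" "y \<notin> h1" "z \<notin> h1" "x \<notin> h2" "y \<notin> h2" "z \<notin> h2"
    using assms(8,9) m by blast+
  have d: "distinct [a,b,w,c,d,x,y,z]" using h1(2-4) h2(2-4) h3(2-4) m n n2 by auto
  have e1: "{a,b,w} \<in> H" using assms(1) h1(1) by (simp add: insert_commute)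
  have e2: "{w,c,d} \<in> H" using assms(2) h2(1) by simp
  have e3: "{x,y,z} \<in> H" using assms(3) h3(1) by simp
  show ?thesis
    apply (rule contains_via_list[OF d])
    using e1 e2 e3 by (simp_all add: P32_K33_def)
qed


lemma L_P:
  assumes "h1 \<in> H" "h2 \<in> H" "h3 \<in> H" "card h1 = 3" "card h2 = 3" "card h3 = 3"
    "card (h1 \<inter> h2) = 1" "card (h2 \<inter> h3) = 1" "h1 \<inter> h3 = {}"
  shows "contains H loose_path3"
proof -
  obtain w1 where w1: "h1 \<inter> h2 = {w1}" using card1_elem assms by blast
  obtain w2 where w2: "h2 \<inter> h3 = {w2}" using card1_elem assms by blast
  have mw: "w1 \<in> h1" "w1 \<in> h2" "w2 \<in> h2" "w2 \<in> h3" using w1 w2 by blast+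
  have ne: "w1 \<noteq> w2" using mw assms(9) by auto
  obtain a b where h1: "h1 = {w1,a,b}" "a\<noteq>b" "a\<noteq>w1" "b\<noteq>w1" by (rule card3_pick1[OF assms(4) mw(1)])
  obtain c where h2: "h2 = {w1,w2,c}" "c\<noteq>w1" "c\<noteq>w2" by (rule card3_pick2[OF assms(5) mw(2) mw(3) ne])
  obtain d g where h3: "h3 = {w2,d,g}" "d\<noteq>g" "d\<noteq>w2" "g\<noteq>w2" by (rule card3_pick1[OF assms(6) mw(4)])
  have m: "a \<in> h1" "b \<in> h1" "c \<in> h2" "d \<in> h3" "g \<in> h3" using h1 h2 h3 by simp_all
  have n: "a \<notin> h2" "b \<notin> h2" "c \<notin> h1" "c \<notin> h3" "d \<notin> h2" "g \<notin> h2"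
    using w1 w2 m h1(3,4) h2(2,3) h3(3,4) by blast+
  have n2: "a \<notin> h3" "b \<notin> h3" "w1 \<notin> h3" "d \<notin> h1" "g \<notin> h1" "w2 \<notin> h1"
    using assms(9) m mw by blast+
  have d: "distinct [a,b,w1,c,w2,d,g]" using h1(2-4) h2(2-3) h3(2-4) ne m mw n n2 by auto
  have e1: "{a,b,w1} \<in> H" using assms(1) h1(1) by (simp add: insert_commute)
  have e2: "{w1,c,w2} \<in> H" using assms(2) h2(1) by (simp add: insert_commute)
  have e3: "{w2,d,g} \<in> H" using assms(3) h3(1) by simp
  show ?thesis
    apply (rule contains_via_list[OF d])
    using e1 e2 e3 by (simp_all add: loose_path3_def)
qed

lemma L_C:
  assumes "h1 \<in> H" "h2 \<in> H" "h3 \<in> H" "card h1 = 3" "card h2 = 3" "card h3 = 3"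
    "card (h1 \<inter> h2) = 1" "card (h2 \<inter> h3) = 1" "card (h3 \<inter> h1) = 1" "h1 \<inter> h2 \<inter> h3 = {}"
  shows "contains H loose_triangle"
proof -
  obtain p where p: "h1 \<inter> h2 = {p}" using card1_elem assms by blast
  obtain q where q: "h2 \<inter> h3 = {q}" using card1_elem assms by blast
  obtain r where r: "h3 \<inter> h1 = {r}" using card1_elem assms by blast
  have mw: "p \<in> h1" "p \<in> h2" "q \<in> h2" "q \<in> h3" "r \<in> h3" "r \<in> h1" using p q r by blast+
  have ne: "p\<noteq>q" "q\<noteq>r" "p\<noteq>r" using mw assms(10) by auto
  obtain s where h1: "h1 = {r,p,s}" "s\<noteq>r" "s\<noteq>p" by (rule card3_pick2[OF assms(4) mw(6) mw(1) ne(3)[symmetric]])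
  obtain t where h2: "h2 = {p,q,t}" "t\<noteq>p" "t\<noteq>q" by (rule card3_pick2[OF assms(5) mw(2) mw(3) ne(1)])
  obtain v where h3: "h3 = {q,r,v}" "v\<noteq>q" "v\<noteq>r" by (rule card3_pick2[OF assms(6) mw(4) mw(5) ne(2)])
  have m: "s \<in> h1" "t \<in> h2" "v \<in> h3" using h1 h2 h3 by simp_all
  have n: "s \<notin> h2" "s \<notin> h3" "t \<notin> h1" "t \<notin> h3" "v \<notin> h1" "v \<notin> h2"
    using p q r m h1(2,3) h2(2,3) h3(2,3) by blast+
  have d: "distinct [r,s,p,t,q,v]" using h1(2-3) h2(2-3) h3(2-3) ne m mw n by auto
  have e1: "{r,s,p} \<in> H" using assms(1) h1(1) by (simp add: insert_commute)
  have e2: "{p,t,q} \<in> H" using assms(2) h2(1) by (simp add: insert_commute)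
  have e3: "{q,v,r} \<in> H" using assms(3) h3(1) by (simp add: insert_commute)
  show ?thesis
    apply (rule contains_via_list[OF d])
    using e1 e2 e3 by (simp_all add: loose_triangle_def)
qed

definition free :: "nat set set \<Rightarrow> bool" where
  "free H \<longleftrightarrow> \<not> contains H loose_path3 \<and> \<not> contains H loose_triangle \<and> \<not> contains H P32_K33"

lemma contains_mono: "H \<subseteq> H' \<Longrightarrow> contains H F \<Longrightarrow> contains H' F"
  unfolding contains_def by blast

lemma free_mono: "H' \<subseteq> H \<Longrightarrow> free H \<Longrightarrow> free H'"
  unfolding free_def using contains_mono by blast

lemma L1:
  assumes "free H" "\<forall>h\<in>H. card h = 3" "e \<in> H" "f \<in> H" "h \<in> H" "e \<inter> f = {}"
    "card (h \<inter> e) = 1"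
  shows "card (h \<inter> f) \<ge> 2"
proof (rule ccontr)
  assume "\<not> ?thesis"
  then have "card (h \<inter> f) = 0 \<or> card (h \<inter> f) = 1" by auto
  then show False
  proof
    assume a: "card (h \<inter> f) = 0"
    have "h \<inter> f = {}" using a assms by (metis card_0_eq finite_Int card.infinite zero_neq_numeral)
    then have "contains H P32_K33"
      using L_Q[of h H e f] assms by (auto simp: Int_commute)
    then show False using assms(1) by (simp add: free_def)
  next
    assume a: "card (h \<inter> f) = 1"
    have "contains H loose_path3"
      using L_P[of e H h f] assms a by (auto simp: Int_commute)
    then show False using assms(1) by (simp add: free_def)
  qed
qed

lemma card3_eq:
  assumes "card h = 3" "card e = 3" "card (h \<inter> e) = 3"
  shows "h = e"
proof -
  have fh: "finite h" "finite e" using assms by (auto intro: card_ge_0_finite)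
  have "h \<inter> e = h" using card_subset_eq[of h "h \<inter> e"] fh assms by auto
  moreover have "h \<inter> e = e" using card_subset_eq[of e "h \<inter> e"] fh assms by auto
  ultimately show ?thesis by simp
qed

lemma constraint:
  assumes fr: "free H" and c3: "\<forall>h\<in>H. card h = 3" and H: "e \<in> H" "f \<in> H" "h1 \<in> H" "h2 \<in> H"
    and ef: "e \<inter> f = {}" and i1: "card (h1 \<inter> e) = 2" and i2: "card (h2 \<inter> e) = 2"
    and dm: "e - h1 \<noteq> e - h2" and dout: "h1 - e \<noteq> h2 - e"
  shows False
proof -
  have ce: "card e = 3" "card h1 = 3" "card h2 = 3" "card f = 3" using c3 H by auto
  have fin: "finite e" "finite h1" "finite h2" using ce by (auto intro: card_ge_0_finite)
  have "card (e - h1) = 1" using card_Diff_subset_Int[of e h1] fin ce i1 by (simp add: Int_commute)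
  then obtain m1 where m1: "e - h1 = {m1}" using card1_elem by blast
  have "card (e - h2) = 1" using card_Diff_subset_Int[of e h2] fin ce i2 by (simp add: Int_commute)
  then obtain m2 where m2: "e - h2 = {m2}" using card1_elem by blast
  have "card (h1 - e) = 1" using card_Diff_subset_Int[of h1 e] fin ce i1 by simp
  then obtain o1 where o1: "h1 - e = {o1}" using card1_elem by blast
  have "card (h2 - e) = 1" using card_Diff_subset_Int[of h2 e] fin ce i2 by simp
  then obtain o2 where o2: "h2 - e = {o2}" using card1_elem by blast
  have mne: "m1 \<noteq> m2" using dm m1 m2 by auto
  have one: "o1 \<noteq> o2" using dout o1 o2 by auto
  obtain w where e3: "e = {m1,m2,w}" "w \<noteq> m1" "w \<noteq> m2"
    using card3_pick2[of e m1 m2] ce m1 m2 mne by blast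
  have h1e: "h1 = {o1, m2, w}"
  proof -
    have a: "h1 = (h1 \<inter> e) \<union> (h1 - e)" by blast
    have b: "h1 \<inter> e = e - {m1}" using m1 by blast
    have c: "e - {m1} = {m2, w}" using e3 mne by auto
    show ?thesis using a b c o1 by simp
  qed
  have h2e: "h2 = {o2, m1, w}"
  proof -
    have a: "h2 = (h2 \<inter> e) \<union> (h2 - e)" by blast
    have b: "h2 \<inter> e = e - {m2}" using m2 by blast
    have c: "e - {m2} = {m1, w}" using e3 mne by auto
    show ?thesis using a b c o2 by simp
  qed
  have o1e: "o1 \<notin> e" "o2 \<notin> e" using o1 o2 by auto
  have i12: "h1 \<inter> h2 = {w}" using h1e h2e o1e e3 one mne by auto
  have fe: "m1 \<notin> f" "m2 \<notin> f" "w \<notin> f" using ef e3 by auto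
  consider "o1 \<in> f" "o2 \<in> f" | "o1 \<in> f" "o2 \<notin> f" | "o1 \<notin> f" "o2 \<in> f" | "o1 \<notin> f" "o2 \<notin> f" by blast
  then show False
  proof cases
    case 1
    have "h2 \<inter> f = {o2}" "f \<inter> h1 = {o1}" using 1 h1e h2e fe by auto
    moreover have "h1 \<inter> h2 \<inter> f = {}" using i12 fe by auto
    ultimately have "contains H loose_triangle"
      using L_C[OF H(3) H(4) H(2) ce(2) ce(3) ce(4)] i12 by simp
    then show False using fr by (simp add: free_def)
  next
    case 2
    have "h1 \<inter> f = {o1}" "h2 \<inter> f = {}" using 2 h1e h2e fe by auto
    then have "contains H loose_path3"
      using L_P[OF H(4) H(3) H(2) ce(3) ce(2) ce(4)] i12 by (simp add: Int_commute)
    then show False using fr by (simp add: free_def)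
  next
    case 3
    have "h2 \<inter> f = {o2}" "h1 \<inter> f = {}" using 3 h1e h2e fe by auto
    then have "contains H loose_path3"
      using L_P[OF H(3) H(4) H(2) ce(2) ce(3) ce(4)] i12 by (simp add: Int_commute)
    then show False using fr by (simp add: free_def)
  next
    case 4
    have "h2 \<inter> f = {}" "h1 \<inter> f = {}" using 4 h1e h2e fe by auto
    then have "contains H P32_K33"
      using L_Q[OF H(3) H(4) H(2) ce(2) ce(3) ce(4)] i12 by (simp add: Int_commute)
    then show False using fr by (simp add: free_def)
  qed
qed


lemma dich:
  assumes ce: "card e = 3" and S: "\<forall>h\<in>S. card h = 3 \<and> card (h \<inter> e) = 2"
    and key: "\<forall>h1\<in>S. \<forall>h2\<in>S. e - h1 \<noteq> e - h2 \<longrightarrow> h1 - e = h2 - e"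
  shows "(\<exists>u\<in>e. \<forall>h\<in>S. u \<notin> h) \<or> card S \<le> 3"
proof -
  have fe: "finite e" using ce by (auto intro: card_ge_0_finite)
  have miss: "\<exists>m\<in>e. e - h = {m}" if "h \<in> S" for h
  proof -
    have "finite h" using S that by (auto intro: card_ge_0_finite)
    have c2: "card (e \<inter> h) = 2" using S that by (metis Int_commute)
    have "card (e - h) = 1" using card_Diff_subset_Int[of e h] fe ce c2 by simp
    then obtain m where "e - h = {m}" using card1_elem by blast
    then show ?thesis by blast
  qed
  show ?thesis
  proof (cases "S = {}")
    case True
    then show ?thesis using ce by (auto simp: card_3_iff)
  next
    case False
    then obtain h1 where h1: "h1 \<in> S" by blast
    obtain m1 where m1: "m1 \<in> e" "e - h1 = {m1}" using miss[OF h1] by blast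
    show ?thesis
    proof (cases "\<forall>h\<in>S. e - h = e - h1")
      case True
      then have "\<forall>h\<in>S. m1 \<notin> h" using m1 by blast
      then show ?thesis using m1 by blast
    next
      case False
      then obtain h2 where h2: "h2 \<in> S" "e - h2 \<noteq> e - h1" by blast
      define D where "D = h1 - e"
      have allD: "h - e = D" if "h \<in> S" for h
      proof (cases "e - h = e - h1")
        case True
        then have "e - h \<noteq> e - h2" using h2 by simp
        then have "h - e = h2 - e" using key that h2 by blast
        also have "h2 - e = h1 - e" using key h1 h2 by metis
        finally show ?thesis unfolding D_def .
      next
        case False
        then show ?thesis using key that h1 unfolding D_def by blast
      qed
      have "S \<subseteq> (\<lambda>u. (e - {u}) \<union> D) ` e"
      proof
        fix h assume hS: "h \<in> S"
        obtain m where m: "m \<in> e" "e - h = {m}" using miss[OF hS] by blast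
        have "h = (h \<inter> e) \<union> (h - e)" by blast
        also have "h \<inter> e = e - {m}" using m by blast
        also have "h - e = D" using allD hS by blast
        finally show "h \<in> (\<lambda>u. (e - {u}) \<union> D) ` e" using m by blast
      qed
      then have "card S \<le> card ((\<lambda>u. (e - {u}) \<union> D) ` e)" by (rule card_mono[OF finite_imageI[OF fe]])
      also have "\<dots> \<le> card e" by (rule card_image_le[OF fe])
      finally show ?thesis using ce by simp
    qed
  qed
qed

lemma row_bound:
  assumes fV: "finite V" and ce: "card e = 3" and eV: "e \<subseteq> V" and u: "u \<in> e"
    and S: "\<forall>h\<in>S. h \<subseteq> V \<and> card h = 3 \<and> card (h \<inter> e) = 2 \<and> u \<notin> h"
  shows "card S \<le> card V - 3"
proof -
  have fe: "finite e" using ce by (auto intro: card_ge_0_finite)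
  have "S \<subseteq> (\<lambda>y. insert y (e - {u})) ` (V - e)"
  proof
    fix h assume hS: "h \<in> S"
    have fh: "finite h" using S hS by (auto intro: card_ge_0_finite)
    have c2: "card (e - {u}) = 2" using ce u fe by simp
    have sub: "h \<inter> e \<subseteq> e - {u}" using S hS by blast
    have eq: "h \<inter> e = e - {u}" using card_subset_eq[OF _ sub] fe c2 S hS by simp
    have "card (h - e) = 1" using card_Diff_subset_Int[of h e] fh S hS by simp
    then obtain y where y: "h - e = {y}" using card1_elem by blast
    have yV: "y \<in> V - e" using y S hS by blast
    have "h = (h \<inter> e) \<union> (h - e)" by blast
    also have "\<dots> = insert y (e - {u})" using eq y by simp
    finally show "h \<in> (\<lambda>y. insert y (e - {u})) ` (V - e)" using yV by blast
  qed
  then have "card S \<le> card ((\<lambda>y. insert y (e - {u})) ` (V - e))"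
    by (rule card_mono[OF finite_imageI[OF finite_Diff[OF fV]]])
  also have "\<dots> \<le> card (V - e)" by (rule card_image_le) (use fV in simp)
  also have "\<dots> = card V - 3" using card_Diff_subset[OF fe eV] ce by simp
  finally show ?thesis .
qed


lemma card_le3: "card h = 3 \<Longrightarrow> card (h \<inter> e) \<le> 3"
  by (metis card_ge_0_finite card_mono inf_le1 zero_less_numeral)

lemma main_bound:
  assumes "finite V" "\<forall>h\<in>H. h \<subseteq> V \<and> card h = 3" "free H" "e \<in> H" "f \<in> H" "e \<inter> f = {}"
  shows "card H + 4 \<le> 2 * card V"
  using assms
proof (induction "card V" arbitrary: V H e f rule: less_induct)
  case less
  note fV = less.prems(1) and HV = less.prems(2) and fr = less.prems(3)
    and eH = less.prems(4) and fH = less.prems(5) and ef = less.prems(6)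
  have c3: "\<forall>h\<in>H. card h = 3" using HV by blast
  have finH: "finite H" using finite_subset[of H "Pow V"] HV fV by blast
  have ce: "card e = 3" "card f = 3" using c3 eH fH by auto
  have fef: "finite e" "finite f" using ce by (auto intro: card_ge_0_finite)
  have eV: "e \<subseteq> V" "f \<subseteq> V" using HV eH fH by auto
  have cV6: "6 \<le> card V"
  proof -
    have "card (e \<union> f) = 6" using card_Un_disjoint[OF fef ef] ce by simp
    moreover have "card (e \<union> f) \<le> card V" using card_mono[OF fV] eV by simp
    ultimately show ?thesis by simp
  qed
  have fe: "f \<inter> e = {}" using ef by blast
  define Se where "Se = {h\<in>H. card (h \<inter> e) = 2}"
  define Sf where "Sf = {h\<in>H. card (h \<inter> f) = 2}"
  define Z where "Z = {h\<in>H. h \<inter> e = {} \<and> h \<inter> f = {}}"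
  have cover: "H \<subseteq> {e,f} \<union> Se \<union> Sf \<union> Z"
  proof
    fix h assume hH: "h \<in> H"
    have ch: "card h = 3" using c3 hH by blast
    have fh: "finite h" using ch by (auto intro: card_ge_0_finite)
    have le: "card (h \<inter> e) \<le> 3" "card (h \<inter> f) \<le> 3" using card_le3[OF ch] by auto
    have "card (h \<inter> e) = 0 \<or> card (h \<inter> e) = 1 \<or> card (h \<inter> e) = 2 \<or> card (h \<inter> e) = 3"
      using le by arith
    moreover have "card (h \<inter> f) = 0 \<or> card (h \<inter> f) = 1 \<or> card (h \<inter> f) = 2 \<or> card (h \<inter> f) = 3"
      using le by arith
    moreover have "card (h \<inter> e) = 1 \<Longrightarrow> card (h \<inter> f) \<ge> 2"
      using L1[OF fr c3 eH fH hH ef] by blast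
    moreover have "card (h \<inter> f) = 1 \<Longrightarrow> card (h \<inter> e) \<ge> 2"
      using L1[OF fr c3 fH eH hH fe] by blast
    moreover have "card (h \<inter> e) = 3 \<Longrightarrow> h = e" using card3_eq ch ce by blast
    moreover have "card (h \<inter> f) = 3 \<Longrightarrow> h = f" using card3_eq ch ce by blast
    moreover have "card (h \<inter> e) = 0 \<Longrightarrow> h \<inter> e = {}" using fh by simp
    moreover have "card (h \<inter> f) = 0 \<Longrightarrow> h \<inter> f = {}" using fh by simp
    moreover have "h = f \<Longrightarrow> card (h \<inter> e) = 0" using fe by simp
    ultimately show "h \<in> {e,f} \<union> Se \<union> Sf \<union> Z"
      unfolding Se_def Sf_def Z_def using hH by auto
  qed
  have keyE: "\<forall>h1\<in>Se. \<forall>h2\<in>Se. e - h1 \<noteq> e - h2 \<longrightarrow> h1 - e = h2 - e"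
    using constraint[OF fr c3 eH fH _ _ ef] unfolding Se_def by blast
  have keyF: "\<forall>h1\<in>Sf. \<forall>h2\<in>Sf. f - h1 \<noteq> f - h2 \<longrightarrow> h1 - f = h2 - f"
    using constraint[OF fr c3 fH eH _ _ fe] unfolding Sf_def by blast
  have dE: "(\<exists>u\<in>e. \<forall>h\<in>Se. u \<notin> h) \<or> card Se \<le> 3"
    by (rule dich[OF ce(1) _ keyE]) (use c3 in \<open>auto simp: Se_def\<close>)
  have dF: "(\<exists>u\<in>f. \<forall>h\<in>Sf. u \<notin> h) \<or> card Sf \<le> 3"
    by (rule dich[OF ce(2) _ keyF]) (use c3 in \<open>auto simp: Sf_def\<close>)
  have bE: "card Se \<le> card V - 3"
    using dE
  proof
    assume "\<exists>u\<in>e. \<forall>h\<in>Se. u \<notin> h"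
    then obtain u where "u \<in> e" "\<forall>h\<in>Se. u \<notin> h" by blast
    then show ?thesis using row_bound[OF fV ce(1) eV(1), of u Se] HV unfolding Se_def by auto
  next
    assume "card Se \<le> 3" then show ?thesis using cV6 by simp
  qed
  have bF: "card Sf \<le> card V - 3"
    using dF
  proof
    assume "\<exists>u\<in>f. \<forall>h\<in>Sf. u \<notin> h"
    then obtain u where "u \<in> f" "\<forall>h\<in>Sf. u \<notin> h" by blast
    then show ?thesis using row_bound[OF fV ce(2) eV(2), of u Sf] HV unfolding Sf_def by auto
  next
    assume "card Sf \<le> 3" then show ?thesis using cV6 by simp
  qed
  show ?case
  proof (cases "Z = {}")
    case True
    have "card H \<le> card ({e,f} \<union> Se \<union> Sf \<union> Z)"
      using card_mono[OF _ cover] finH by (simp add: Se_def Sf_def Z_def)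
    also have "\<dots> \<le> card {e,f} + card Se + card Sf + card Z"
      by (meson add_le_mono card_Un_le le_refl order_trans)
    also have "card {e,f} \<le> 2" by (simp add: card_insert_le_m1)
    finally show ?thesis using True bE bF cV6 by simp
  next
    case False
    then obtain g where gZ: "g \<in> Z" by blast
    have gH: "g \<in> H" and eg: "e \<inter> g = {}" and fg: "f \<inter> g = {}" using gZ unfolding Z_def by auto
    have meet: "h = e \<or> h \<in> Se" if hH: "h \<in> H" and ne: "h \<inter> e \<noteq> {}" for h
    proof -
      have ch: "card h = 3" using c3 hH by blast
      have fh: "finite h" using ch by (auto intro: card_ge_0_finite)
      have le: "card (h \<inter> e) \<le> 3" using card_le3[OF ch] by auto
      have pos: "card (h \<inter> e) \<noteq> 0" using ne fh by simp
      have n1: "card (h \<inter> e) \<noteq> 1"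
      proof
        assume a: "card (h \<inter> e) = 1"
        have "card (h \<inter> f) \<ge> 2" using L1[OF fr c3 eH fH hH ef a] .
        moreover have "card (h \<inter> g) \<ge> 2" using L1[OF fr c3 eH gH hH eg a] .
        moreover have "card ((h \<inter> f) \<union> (h \<inter> g)) = card (h \<inter> f) + card (h \<inter> g)"
          by (rule card_Un_disjoint) (use fh fg in auto)
        moreover have "card ((h \<inter> f) \<union> (h \<inter> g)) \<le> card h"
          by (rule card_mono[OF fh]) auto
        ultimately show False using ch by simp
      qed
      have "card (h \<inter> e) = 2 \<or> card (h \<inter> e) = 3" using le pos n1 by arith
      then show ?thesis using card3_eq[OF ch ce(1)] hH unfolding Se_def by blast
    qed
    show ?thesis
      using dE
    proof
      assume "\<exists>u\<in>e. \<forall>h\<in>Se. u \<notin> h"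
      then obtain u where u: "u \<in> e" "\<forall>h\<in>Se. u \<notin> h" by blast
      define H' where "H' = {h\<in>H. u \<notin> h}"
      define V' where "V' = V - {u}"
      have sub: "H \<subseteq> insert e H'"
      proof
        fix h assume hH: "h \<in> H"
        show "h \<in> insert e H'"
        proof (cases "u \<in> h")
          case True
          then have "h \<inter> e \<noteq> {}" using u by blast
          then have "h = e \<or> h \<in> Se" using meet hH by blast
          then show ?thesis using u True by auto
        next
          case False then show ?thesis using hH unfolding H'_def by blast
        qed
      qed
      have uV: "u \<in> V" using u eV by blast
      have cV': "card V' = card V - 1" unfolding V'_def using uV fV by simp
      have lt: "card V' < card V" using cV' cV6 by simp
      have IH: "card H' + 4 \<le> 2 * card V'"
      proof (rule less.hyps[OF lt])
        show "finite V'" unfolding V'_def using fV by simp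
        show "\<forall>h\<in>H'. h \<subseteq> V' \<and> card h = 3" using HV unfolding H'_def V'_def by blast
        show "free H'" by (rule free_mono[OF _ fr]) (auto simp: H'_def)
        show "f \<in> H'" using fH u ef unfolding H'_def by blast
        show "g \<in> H'" using gH u eg unfolding H'_def by blast
        show "f \<inter> g = {}" by (rule fg)
      qed
      have finH': "finite H'" using finH unfolding H'_def by simp
      have "card H \<le> card (insert e H')" by (rule card_mono[OF _ sub]) (simp add: finH')
      also have "\<dots> \<le> card H' + 1" by (simp add: card_insert_if finH')
      finally show ?thesis using IH cV' cV6 by simp
    next
      assume cS: "card Se \<le> 3"
      define H' where "H' = {h\<in>H. h \<inter> e = {}}"
      define V' where "V' = V - e"
      have sub: "H \<subseteq> insert e (Se \<union> H')"
      proof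
        fix h assume hH: "h \<in> H"
        show "h \<in> insert e (Se \<union> H')"
        proof (cases "h \<inter> e = {}")
          case False
          then show ?thesis using meet hH by blast
        next
          case True then show ?thesis using hH unfolding H'_def by blast
        qed
      qed
      have cV': "card V' = card V - 3" unfolding V'_def using card_Diff_subset[OF fef(1) eV(1)] ce by simp
      have lt: "card V' < card V" using cV' cV6 by simp
      have IH: "card H' + 4 \<le> 2 * card V'"
      proof (rule less.hyps[OF lt])
        show "finite V'" unfolding V'_def using fV by simp
        show "\<forall>h\<in>H'. h \<subseteq> V' \<and> card h = 3" using HV unfolding H'_def V'_def by blast
        show "free H'" by (rule free_mono[OF _ fr]) (auto simp: H'_def)
        show "f \<in> H'" using fH ef unfolding H'_def by blast
        show "g \<in> H'" using gH eg unfolding H'_def by blast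
        show "f \<inter> g = {}" by (rule fg)
      qed
      have finH': "finite H'" "finite Se" using finH unfolding H'_def Se_def by simp_all
      have "card H \<le> card (insert e (Se \<union> H'))" by (rule card_mono[OF _ sub]) (simp add: finH')
      also have "\<dots> \<le> card (Se \<union> H') + 1" by (simp add: card_insert_if finH')
      also have "card (Se \<union> H') \<le> card Se + card H'" by (rule card_Un_le)
      finally show ?thesis using IH cV' cV6 cS by simp
    qed
  qed
qed


lemma upper:
  assumes tg: "three_graph n H" and fr: "free H" and M: "contains H matching2"
  shows "card H \<le> 2 * n - 4"
proof -
  obtain \<phi> where inj: "inj_on \<phi> (\<Union>matching2)" and im: "\<forall>e\<in>matching2. \<phi> ` e \<in> H"
    using M unfolding contains_def by blast
  have e: "\<phi> ` {0,1,2} \<in> H" and f: "\<phi> ` {3,4,5} \<in> H" using im by (auto simp: matching2_def)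
  have "\<phi> ` {0,1,2} \<inter> \<phi> ` {3,4,5} = \<phi> ` ({0,1,2} \<inter> {3,4,5})"
    by (rule inj_on_image_Int[OF inj, symmetric]) (auto simp: matching2_def)
  then have ef: "\<phi> ` {0,1,2} \<inter> \<phi> ` {3,4,5} = {}" by simp
  have "card H + 4 \<le> 2 * card {..<n}"
    by (rule main_bound[OF _ _ fr e f ef]) (use tg in \<open>auto simp: three_graph_def\<close>)
  then show ?thesis by simp
qed

lemma no3:
  assumes ty: "\<forall>h\<in>H. p \<subseteq> h \<or> q \<subseteq> h" and cp: "card p = 2" "card q = 2"
    and c: "contains H F" and fin: "\<forall>A\<in>F. finite A"
    and ABC: "A \<in> F" "B \<in> F" "C \<in> F"
    and i: "card (A \<inter> B) \<le> 1" "card (B \<inter> C) \<le> 1" "card (A \<inter> C) \<le> 1"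
  shows False
proof -
  obtain \<phi> where inj: "inj_on \<phi> (\<Union>F)" and im: "\<forall>e\<in>F. \<phi> ` e \<in> H"
    using c unfolding contains_def by blast
  have bad: "False" if "X \<in> F" "Y \<in> F" "card (X \<inter> Y) \<le> 1" "r \<subseteq> \<phi> ` X" "r \<subseteq> \<phi> ` Y" "card r = 2"
    for X Y r
  proof -
    have eq: "\<phi> ` X \<inter> \<phi> ` Y = \<phi> ` (X \<inter> Y)"
      by (rule inj_on_image_Int[OF inj, symmetric]) (use that in auto)
    have fX: "finite (X \<inter> Y)" using fin that by blast
    have "card r \<le> card (\<phi> ` X \<inter> \<phi> ` Y)"
      by (rule card_mono) (use eq fX that in auto)
    also have "\<dots> \<le> card (X \<inter> Y)" unfolding eq by (rule card_image_le[OF fX])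
    finally show False using that by simp
  qed
  have t: "p \<subseteq> \<phi> ` A \<or> q \<subseteq> \<phi> ` A" "p \<subseteq> \<phi> ` B \<or> q \<subseteq> \<phi> ` B" "p \<subseteq> \<phi> ` C \<or> q \<subseteq> \<phi> ` C"
    using ty im ABC by auto
  have i': "card (B \<inter> A) \<le> 1" "card (C \<inter> B) \<le> 1" "card (C \<inter> A) \<le> 1" using i by (simp_all add: Int_commute)
  show False using t bad[OF ABC(1) ABC(2) i(1)] bad[OF ABC(2) ABC(3) i(2)] bad[OF ABC(1) ABC(3) i(3)] cp
    by blast
qed

definition H0 :: "nat \<Rightarrow> nat set set" where
  "H0 n = (\<lambda>x. {0,1,x}) ` {2..<n} \<union> (\<lambda>x. {2,3,x}) ` ({..<n} - {2,3})"

lemma H0_typ: "\<forall>h\<in>H0 n. {0,1} \<subseteq> h \<or> {2,3} \<subseteq> h"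
  unfolding H0_def by auto

lemma H0_free: "free (H0 n)"
proof -
  have t: "\<forall>h\<in>H0 n. {0::nat,1} \<subseteq> h \<or> {2,3} \<subseteq> h" by (rule H0_typ)
  have c2: "card {0::nat,1} = 2" "card {2::nat,3} = 2" by simp_all
  have P: "\<not> contains (H0 n) loose_path3"
  proof
    assume c: "contains (H0 n) loose_path3"
    show False
      by (rule no3[OF t c2 c, of "{0,1,2}" "{2,3,4}" "{4,5,6}"]) (simp_all add: loose_path3_def)
  qed
  have C: "\<not> contains (H0 n) loose_triangle"
  proof
    assume c: "contains (H0 n) loose_triangle"
    show False
      by (rule no3[OF t c2 c, of "{0,1,2}" "{2,3,4}" "{4,5,0}"]) (simp_all add: loose_triangle_def)
  qed
  have Q: "\<not> contains (H0 n) P32_K33"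
  proof
    assume c: "contains (H0 n) P32_K33"
    show False
      by (rule no3[OF t c2 c, of "{0,1,2}" "{2,3,4}" "{5,6,7}"]) (simp_all add: P32_K33_def)
  qed
  show ?thesis using P C Q by (simp add: free_def)
qed

lemma neq01: "{0::nat,1,x} \<noteq> {2,3,y}"
proof
  assume eq: "{0::nat,1,x} = {2,3,y}"
  have "(0::nat) \<in> {2,3,y}" unfolding eq[symmetric] by simp
  then have "y = 0" by simp
  moreover have "(1::nat) \<in> {2,3,y}" unfolding eq[symmetric] by simp
  ultimately show False by simp
qed

lemma H0_card:
  assumes "n \<ge> 6" shows "card (H0 n) = 2 * n - 4"
proof -
  have i1: "inj_on (\<lambda>x. {0::nat,1,x}) {2..<n}"
    by (auto simp: inj_on_def doubleton_eq_iff insert_eq_iff)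
  have i2: "inj_on (\<lambda>x. {2::nat,3,x}) ({..<n} - {2,3})"
    by (auto simp: inj_on_def doubleton_eq_iff insert_eq_iff)
  have c1: "card ((\<lambda>x. {0::nat,1,x}) ` {2..<n}) = n - 2" using card_image[OF i1] by simp
  have c2: "card ((\<lambda>x. {2::nat,3,x}) ` ({..<n} - {2,3})) = n - 2"
    using card_image[OF i2] assms by (simp add: card_Diff_subset)
  have d: "(\<lambda>x. {0::nat,1,x}) ` {2..<n} \<inter> (\<lambda>x. {2,3,x}) ` ({..<n} - {2,3}) = {}"
    using neq01 by blast
  have "card (H0 n) = (n - 2) + (n - 2)"
    unfolding H0_def by (subst card_Un_disjoint) (use c1 c2 d in auto)
  then show ?thesis using assms by simp
qed

lemma H0_tg: assumes "n \<ge> 6" shows "three_graph n (H0 n)"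
  unfolding three_graph_def H0_def using assms by auto

lemma H0_M: assumes "n \<ge> 6" shows "contains (H0 n) matching2"
proof (rule contains_via_list[of "[0,1,4,2,3,5]"])
  show "distinct [0::nat,1,4,2,3,5]" by simp
  show "\<Union>matching2 \<subseteq> {..<length [0::nat,1,4,2,3,5]}" by (auto simp: matching2_def)
  have a: "{0::nat,1,4} \<in> H0 n" unfolding H0_def using assms by (intro UnI1 image_eqI[of _ _ 4]) auto
  have b: "{2::nat,3,5} \<in> H0 n" unfolding H0_def using assms by (intro UnI2 image_eqI[of _ _ 5]) auto
  show "\<forall>e\<in>matching2. (!) [0,1,4,2,3,5] ` e \<in> H0 n" using a b by (simp add: matching2_def)
qed

theorem mainTheorem7:
  fixes n :: nat
  assumes "n \<ge> 6"
  shows "ex3 n {loose_path3, loose_triangle, P32_K33} {matching2} = 2 * n - 4"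
proof -
  let ?S = "{card H | H. three_graph n H \<and> (\<forall>F\<in>{loose_path3, loose_triangle, P32_K33}. \<not> contains H F)
                                  \<and> (\<exists>G\<in>{matching2}. contains H G)}"
  have ub: "y \<le> 2 * n - 4" if yS: "y \<in> ?S" for y
  proof -
    obtain H where H: "y = card H" "three_graph n H" "free H"
      "contains H matching2" using yS by (auto simp: free_def)
    then show ?thesis using upper[OF H(2) H(3) H(4)] H(1) by simp
  qed
  have mem: "2 * n - 4 \<in> ?S"
  proof -
    have "free (H0 n)" by (rule H0_free)
    then have "\<forall>F\<in>{loose_path3, loose_triangle, P32_K33}. \<not> contains (H0 n) F" by (simp add: free_def)
    then show ?thesis using H0_card[OF assms] H0_tg[OF assms] H0_M[OF assms] by force
  qed
  have fin: "finite ?S" by (rule finite_subset[of _ "{..2*n-4}"]) (use ub in auto)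
  show ?thesis unfolding ex3_def by (rule Max_eqI[OF fin ub mem])
qed

end
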